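(* Consider the covariate-adaptive randomization design described in the context with $I=2$ covariates, each having 2 levels (so $2\times 2=4$ strata). Let the weights $w_{o}, w_{m,1}, w_{m,2}, w_{s}$ be nonnegative with $w_{o}+w_{m,1}+w_{m,2}+w_{s}=1$. Suppose the following two conditions hold: (A) $w_{s}>0$; (B) define $u_{1}=w_{o}+w_{m,1}+w_{m,2}+w_{s}=1$, $u_{2}=w_{o}+w_{m,1}$, $u_{3}=w_{o}+w_{m,2}$, $u_{4}=w_{o}$; the solution $\mathbf{x}=(x_{1},x_{2},x_{3})$ of the linear system \[ \begin{pmatrix} u_{1} & u_{2} & u_{3}\\ u_{2} & u_{1} & u_{4}\\ u_{3} & u_{4} & u_{1}\end{pmatrix} \begin{pmatrix} x_{1}\\ x_{2}\\ x_{3}\end{pmatrix} =\begin{pmatrix} u_{4}\\ u_{3}\\ u_{2}\end{pmatrix} \] satisfies $|x_{1}|+|x_{2}|+|x_{3}|<1$. Then $(\mathbf{D}_{n})_{n\geq1}$ is a positive recurrent Markov chain with period 2 on $\mathbb{Z}^{4}$.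
   Context: Two treatments (1 and 2) are compared; patients arrive sequentially. There are $I$ covariates, covariate $i$ having $m_i$ levels; a stratum is a covariate profile $(k_1,\ldots,k_I)$ and a margin $(i;k_i)$ is the set of patients whose $i$th covariate is at level $k_i$. The covariate profiles $Z_1,Z_2,\ldots$ are i.i.d. multinomial over the strata. After $n-1$ patients, $D_{n-1}$, $D_{n-1}(i;k_i)$ and $D_{n-1}(k_1,\ldots,k_I)$ denote (number in treatment 1) minus (number in treatment 2) overall, on margin $(i;k_i)$, and within stratum $(k_1,\ldots,k_I)$. If the $n$th patient falls in stratum $(k_1^*,\ldots,k_I^* )$, let $\mathit{Imb}_n^{(1)}=w_o[D_{n-1}+1]^2+\sum_{i=1}^I w_{m,i}[D_{n-1}(i;k_i^* )+1]^2+w_s[D_{n-1}(k_1^*,\ldots,k_I^* )+1]^2$ be the weighted imbalance if the patient is assigned to treatment 1, and $\mathit{Imb}_n^{(2)}$ the analogous quantity with $-1$ in place of $+1$. The first patient is assigned to treatment 1 with probability $1/2$; for $n>1$, the $n$th patient is assigned to treatment 1 with probability $q$ if $\mathit{Imb}_n^{(1)}>\mathit{Imb}_n^{(2)}$, $p$ if $\mathit{Imb}_n^{(1)}<\mathit{Imb}_n^{(2)}$, and $1/2$ otherwise, where $0<q<p<1$, $p+q=1$. $\mathbf{D}_n=[D_n(k_1,\ldots,k_I)]$ is the array of within-stratum differences after $n$ patients; $(\mathbf{D}_n)_{n\ge1}$ is a Markov chain on $\mathbb{Z}^m$, $m=\prod_i m_i$. *)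

theory Defs
  imports "HOL-Probability.Probability"
begin

primrec mc_steps :: "('a \<Rightarrow> 'a pmf) \<Rightarrow> nat \<Rightarrow> 'a \<Rightarrow> 'a pmf" where
  "mc_steps K 0 x = return_pmf x"
| "mc_steps K (Suc n) x = bind_pmf (mc_steps K n x) K"

definition n_step :: "('a \<Rightarrow> 'a pmf) \<Rightarrow> nat \<Rightarrow> 'a \<Rightarrow> 'a \<Rightarrow> real" where
  "n_step K n x y = pmf (mc_steps K n x) y"

definition accessible :: "('a \<Rightarrow> 'a pmf) \<Rightarrow> 'a \<Rightarrow> 'a \<Rightarrow> bool" where
  "accessible K x y \<longleftrightarrow> (\<exists>n. n_step K n x y > 0)"

text \<open>Chain started at x, absorbed in None at the first return (at time \<ge> 1) to x.\<close>
primrec return_steps :: "('a \<Rightarrow> 'a pmf) \<Rightarrow> 'a \<Rightarrow> nat \<Rightarrow> 'a option pmf" where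
  "return_steps K x 0 = return_pmf (Some x)"
| "return_steps K x (Suc n) = bind_pmf (return_steps K x n)
     (\<lambda>st. case st of None \<Rightarrow> return_pmf None
                  | Some d \<Rightarrow> map_pmf (\<lambda>d'. if d' = x then None else Some d') (K d))"

text \<open>P_x(T_x \<le> n), where T_x = min {n \<ge> 1. X_n = x}.\<close>
definition return_by :: "('a \<Rightarrow> 'a pmf) \<Rightarrow> 'a \<Rightarrow> nat \<Rightarrow> real" where
  "return_by K x n = pmf (return_steps K x n) None"

definition first_return_prob :: "('a \<Rightarrow> 'a pmf) \<Rightarrow> 'a \<Rightarrow> nat \<Rightarrow> real" where
  "first_return_prob K x n = (if n = 0 then 0 else return_by K x n - return_by K x (n - 1))"

definition positive_recurrent :: "('a \<Rightarrow> 'a pmf) \<Rightarrow> 'a \<Rightarrow> bool" where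
  "positive_recurrent K x \<longleftrightarrow>
     summable (first_return_prob K x) \<and> (\<Sum>n. first_return_prob K x n) = 1 \<and>
     summable (\<lambda>n. real n * first_return_prob K x n)"

definition period :: "('a \<Rightarrow> 'a pmf) \<Rightarrow> 'a \<Rightarrow> nat" where
  "period K x = Gcd {n. 0 < n \<and> 0 < n_step K n x x}"

text \<open>A stratum (k1,k2): level of covariate 1 is fst, of covariate 2 is snd.
  A state is the array of within-stratum differences D(k1,k2).\<close>
type_synonym stratum = "bool \<times> bool"
type_synonym cstate = "stratum \<Rightarrow> int"

definition imb :: "real \<Rightarrow> real \<Rightarrow> real \<Rightarrow> real \<Rightarrow> cstate \<Rightarrow> stratum \<Rightarrow> int \<Rightarrow> real" where
  "imb wo wm1 wm2 ws d s e =
     wo * (of_int ((\<Sum>t\<in>UNIV. d t) + e))\<^sup>2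
   + wm1 * (of_int ((\<Sum>t\<in>{t. fst t = fst s}. d t) + e))\<^sup>2
   + wm2 * (of_int ((\<Sum>t\<in>{t. snd t = snd s}. d t) + e))\<^sup>2
   + ws * (of_int (d s + e))\<^sup>2"

definition assign_prob :: "real \<Rightarrow> real \<Rightarrow> real \<Rightarrow> real \<Rightarrow> real \<Rightarrow> real \<Rightarrow> cstate \<Rightarrow> stratum \<Rightarrow> real" where
  "assign_prob wo wm1 wm2 ws p q d s =
     (if imb wo wm1 wm2 ws d s 1 > imb wo wm1 wm2 ws d s (-1) then q
      else if imb wo wm1 wm2 ws d s 1 < imb wo wm1 wm2 ws d s (-1) then p
      else 1/2)"

text \<open>Transition kernel of (D_n): the new patient's stratum is drawn from Z,
  then assigned to treatment 1 (+1) or 2 (-1).\<close>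
definition car_kernel :: "real \<Rightarrow> real \<Rightarrow> real \<Rightarrow> real \<Rightarrow> real \<Rightarrow> real \<Rightarrow> stratum pmf \<Rightarrow> cstate \<Rightarrow> cstate pmf" where
  "car_kernel wo wm1 wm2 ws p q Z d =
     bind_pmf Z (\<lambda>s. map_pmf (\<lambda>b. d(s := d s + (if b then 1 else -1)))
                              (bernoulli_pmf (assign_prob wo wm1 wm2 ws p q d s)))"

definition chain_states :: "(cstate \<Rightarrow> cstate pmf) \<Rightarrow> cstate set" where
  "chain_states K = {y. \<exists>n\<ge>1. n_step K n (\<lambda>_. 0) y > 0}"

end

theory Submission
  imports Defs
begin


lemma ret_no_x0: "Some x \<notin> set_pmf (return_steps K x (Suc n))"
  by (auto split: option.splits)

lemma return_by_mono: "return_by K x n \<le> return_by K x (Suc n)"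
proof -
  have "ennreal (return_by K x n) = (\<integral>\<^sup>+ st. indicator {None} st \<partial>return_steps K x n)"
    by (simp add: return_by_def emeasure_pmf_single)
  also have "\<dots> \<le> (\<integral>\<^sup>+ st. ennreal (pmf (case st of None \<Rightarrow> return_pmf None
                  | Some d \<Rightarrow> map_pmf (\<lambda>d'. if d' = x then None else Some d') (K d)) None) \<partial>return_steps K x n)"
    by (intro nn_integral_mono) (auto split: option.splits split_indicator)
  also have "\<dots> = ennreal (return_by K x (Suc n))"
    by (simp add: return_by_def ennreal_pmf_bind)
  finally show ?thesis by (metis ennreal_le_iff pmf_nonneg return_by_def)
qed

lemma return_by_le1: "return_by K x n \<le> 1"
  by (simp add: return_by_def pmf_le_1)

lemma return_by_0: "return_by K x 0 = 0"
  by (simp add: return_by_def)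

lemma foster_generic:
  fixes W :: "'a \<Rightarrow> real" and K :: "'a \<Rightarrow> 'a pmf"
  assumes W0: "\<And>y. W y \<ge> 0" and Wx: "W x = 0"
    and drift: "\<And>d. d \<noteq> x \<Longrightarrow> (\<integral>\<^sup>+ y. ennreal (W y) \<partial>K d) + 1 \<le> ennreal (W d)"
    and fin: "(\<integral>\<^sup>+ y. ennreal (W y) \<partial>K x) < \<infinity>"
  shows "positive_recurrent K x"
proof -
  define f :: "'a option \<Rightarrow> ennreal" where "f w = (case w of None \<Rightarrow> 0 | Some d \<Rightarrow> ennreal (W d))" for w
  define c :: "'a option \<Rightarrow> ennreal" where "c w = (case w of None \<Rightarrow> 0 | Some d \<Rightarrow> 1)" for w
  define u where "u n = (\<integral>\<^sup>+ w. f w \<partial>return_steps K x n)" for n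
  define a where "a n = (\<integral>\<^sup>+ w. c w \<partial>return_steps K x n)" for n
  define b where "b n = 1 - return_by K x n" for n
  have a_eq: "a n = ennreal (b n)" for n
  proof -
    have "a n = (\<integral>\<^sup>+ w. 1 - indicator {None} w \<partial>return_steps K x n)"
      unfolding a_def by (intro nn_integral_cong) (auto simp: c_def split: option.splits)
    also have "\<dots> = (\<integral>\<^sup>+ w. 1 \<partial>return_steps K x n) - (\<integral>\<^sup>+ w. indicator {None} w \<partial>return_steps K x n)"
      by (subst nn_integral_diff) (auto split: split_indicator)
    also have "\<dots> = ennreal (b n)"
      by (simp add: b_def return_by_def emeasure_pmf_single)
         (metis ennreal_1 ennreal_minus pmf_nonneg)
    finally show ?thesis .
  qed
  have step: "u (Suc n) + a n \<le> u n" if n1: "n \<ge> 1" for n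
  proof -
    obtain m where m: "n = Suc m" using n1 by (cases n) auto
    have "u (Suc n) = (\<integral>\<^sup>+ st. (case st of None \<Rightarrow> 0 | Some d \<Rightarrow> \<integral>\<^sup>+ y. ennreal (W y) \<partial>K d) \<partial>return_steps K x n)"
      unfolding u_def
      by (simp, intro nn_integral_cong) (auto simp: f_def Wx split: option.splits intro!: nn_integral_cong)
    then have "u (Suc n) + a n = (\<integral>\<^sup>+ st. (case st of None \<Rightarrow> 0 | Some d \<Rightarrow> \<integral>\<^sup>+ y. ennreal (W y) \<partial>K d) + c st \<partial>return_steps K x n)"
      unfolding a_def by (simp add: nn_integral_add)
    also have "\<dots> \<le> u n"
      unfolding u_def
    proof (intro nn_integral_mono_AE)
      show "AE st in measure_pmf (return_steps K x n). (case st of None \<Rightarrow> 0 | Some d \<Rightarrow> \<integral>\<^sup>+ y. ennreal (W y) \<partial>K d) + c st \<le> f st"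
        unfolding AE_measure_pmf_iff
      proof
        fix st assume "st \<in> set_pmf (return_steps K x n)"
        then have "st \<noteq> Some x" using ret_no_x0[of x K m] m by auto
        then show "(case st of None \<Rightarrow> 0 | Some d \<Rightarrow> \<integral>\<^sup>+ y. ennreal (W y) \<partial>K d) + c st \<le> f st"
          using drift by (auto simp: c_def f_def split: option.splits)
      qed
    qed
    finally show ?thesis .
  qed
  have partial: "u (Suc N) + (\<Sum>n\<in>{1..N}. a n) \<le> u 1" for N
  proof (induction N)
    case 0 then show ?case by simp
  next
    case (Suc N)
    have "u (Suc (Suc N)) + (\<Sum>n\<in>{1..Suc N}. a n) = (u (Suc (Suc N)) + a (Suc N)) + (\<Sum>n\<in>{1..N}. a n)"
      by (simp add: add_ac)
    also have "\<dots> \<le> u (Suc N) + (\<Sum>n\<in>{1..N}. a n)"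
      using step[of "Suc N"] by (intro add_right_mono) auto
    also have "\<dots> \<le> u 1" using Suc .
    finally show ?case .
  qed
  have u1: "u 1 = (\<integral>\<^sup>+ y. ennreal (W y) \<partial>K x)"
    unfolding u_def by (simp add: f_def) (intro nn_integral_cong, simp add: Wx)
  define B where "B = enn2real (u 1)"
  have uB: "u 1 = ennreal B" using fin u1 B_def by (simp add: less_top ennreal_enn2real_if)
  have b0: "b n \<ge> 0" for n using return_by_le1[of K x n] by (simp add: b_def)
  have bsum: "(\<Sum>n\<in>{1..N}. b n) \<le> B" for N
  proof -
    have "ennreal (\<Sum>n\<in>{1..N}. b n) = (\<Sum>n\<in>{1..N}. a n)"
      using b0 by (simp add: a_eq sum_ennreal)
    also have "\<dots> \<le> u 1" by (rule order_trans[OF _ partial[of N]]) simp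
    finally have "ennreal (\<Sum>n\<in>{1..N}. b n) \<le> ennreal B" using uB by simp
    moreover have "B \<ge> 0" by (simp add: B_def)
    ultimately show ?thesis by (simp add: ennreal_le_iff)
  qed
  have bsum': "(\<Sum>n<N. b n) \<le> 1 + B" for N
  proof -
    have "(\<Sum>n<N. b n) \<le> (\<Sum>n<Suc N. b n)" using b0 by (intro sum_mono2) auto
    also have "\<dots> = b 0 + (\<Sum>n\<in>{1..N}. b n)"
      by (simp add: atLeast1_atMost_eq_remove0 lessThan_Suc_atMost sum.remove[of "{..N}" 0])
    also have "\<dots> \<le> 1 + B" using bsum[of N] by (simp add: b_def return_by_0)
    finally show ?thesis .
  qed
  have bsumm: "summable b"
    by (rule summableI_nonneg_bounded[where x="1+B"]) (use b0 bsum' in auto)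
  have blim: "b \<longlonglongrightarrow> 0" using summable_LIMSEQ_zero[OF bsumm] .
  have fr: "first_return_prob K x (Suc n) = b n - b (Suc n)" for n
    by (simp add: first_return_prob_def b_def)
  have s1: "(\<lambda>n. b n - b (Suc n)) sums (b 0 - 0)"
    by (rule telescope_sums'[OF blim])
  then have "(\<lambda>n. first_return_prob K x (Suc n)) sums 1" by (simp add: fr b_def return_by_0)
  then have S: "first_return_prob K x sums 1"
    using sums_Suc_iff[of "first_return_prob K x" 1] by (simp add: first_return_prob_def)
  have fnn: "first_return_prob K x n \<ge> 0" for n
    using return_by_mono[of K x "n - 1"] by (cases n) (auto simp: first_return_prob_def)
  have ident: "(\<Sum>n<Suc N. real n * first_return_prob K x n) = (\<Sum>k<N. b k) - real N * b N" for N
  proof (induction N)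
    case 0 then show ?case by (simp add: first_return_prob_def)
  next
    case (Suc N)
    then show ?case by (simp add: fr algebra_simps)
  qed
  have "summable (\<lambda>n. real n * first_return_prob K x n)"
  proof (rule summableI_nonneg_bounded[where x="suminf b"])
    fix N
    show "(\<Sum>n<N. real n * first_return_prob K x n) \<le> suminf b"
    proof (cases N)
      case 0 then show ?thesis using suminf_nonneg[OF bsumm b0] by simp
    next
      case (Suc M)
      have "(\<Sum>n<N. real n * first_return_prob K x n) \<le> (\<Sum>k<M. b k)"
        using ident[of M] b0[of M] Suc by simp
      also have "\<dots> \<le> suminf b" using sum_le_suminf[OF bsumm] b0 by auto
      finally show ?thesis .
    qed
  qed (use fnn in auto)
  then show ?thesis unfolding positive_recurrent_def using S by (auto simp: sums_iff)
qed




definition up :: "cstate \<Rightarrow> stratum \<Rightarrow> cstate" where "up d s = d(s := d s + 1)"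
definition dn :: "cstate \<Rightarrow> stratum \<Rightarrow> cstate" where "dn d s = d(s := d s - 1)"

locale car =
  fixes wo wm1 wm2 ws p q :: real and Z :: "stratum pmf"
  assumes wo: "wo \<ge> 0" and wm1: "wm1 \<ge> 0" and wm2: "wm2 \<ge> 0" and ws: "ws > 0"
    and wsum: "wo + wm1 + wm2 + ws = 1"
    and q0: "0 < q" and qp: "q < p" and p1: "p < 1" and pq: "p + q = 1"
    and Zpos: "\<And>s. pmf Z s > 0"
begin

abbreviation K where "K \<equiv> car_kernel wo wm1 wm2 ws p q Z"
abbreviation a where "a \<equiv> assign_prob wo wm1 wm2 ws p q"

definition Ex :: "cstate \<Rightarrow> (cstate \<Rightarrow> real) \<Rightarrow> real" where
  "Ex d F = (\<Sum>s\<in>UNIV. pmf Z s * (a d s * F (up d s) + (1 - a d s) * F (dn d s)))"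

lemma a_bounds: "q \<le> a d s" "a d s \<le> p" "0 < a d s" "a d s < 1"
  using q0 qp p1 pq by (auto simp: assign_prob_def)

lemma a_01: "0 \<le> a d s" "a d s \<le> 1" "0 \<le> 1 - a d s"
  using a_bounds[of d s] by auto

lemma setZ: "set_pmf Z = UNIV"
  using Zpos by (auto simp: set_pmf_iff) (metis less_irrefl)

lemma K_expect:
  assumes F0: "\<And>y. F y \<ge> 0"
  shows "(\<integral>\<^sup>+ y. ennreal (F y) \<partial>K d) = ennreal (Ex d F)"
proof -
  have inner: "(\<integral>\<^sup>+ b. ennreal (F (d(s := d s + (if b then 1 else -1)))) \<partial>bernoulli_pmf (a d s))
      = ennreal (a d s * F (up d s) + (1 - a d s) * F (dn d s))" for s
  proof -
    have "0 \<le> a d s" "a d s \<le> 1" using a_bounds[of d s] by auto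
    then show ?thesis using F0[of "up d s"] F0[of "dn d s"]
      by (simp add: up_def dn_def ennreal_mult[symmetric] ennreal_plus[symmetric] mult.commute
               del: ennreal_plus)
  qed
  have "(\<integral>\<^sup>+ y. ennreal (F y) \<partial>K d) =
     (\<integral>\<^sup>+ s. ennreal (a d s * F (up d s) + (1 - a d s) * F (dn d s)) \<partial>Z)"
    unfolding car_kernel_def by (simp add: inner)
  also have "\<dots> = (\<Sum>s\<in>UNIV. ennreal (a d s * F (up d s) + (1 - a d s) * F (dn d s)) * pmf Z s)"
    by (rule nn_integral_measure_pmf_support) auto
  also have "\<dots> = ennreal (Ex d F)"
    unfolding Ex_def
    apply (subst sum_ennreal[symmetric])
    using F0
     apply (auto intro!: sum.cong mult_nonneg_nonneg add_nonneg_nonneg simp: a_01 ennreal_mult' mult.commute)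
    done
  finally show ?thesis .
qed

end



lemma sum_upd_g: fixes g :: "'b \<Rightarrow> real" shows "finite A \<Longrightarrow> (\<Sum>t\<in>A. g ((d(s := v)) t)) = (\<Sum>t\<in>A. g (d t)) + (if s \<in> A then g v - g (d s) else 0)"
proof -
  assume fA: "finite A"
  have "(\<Sum>t\<in>A. g ((d(s := v)) t)) = (\<Sum>t\<in>A. g (d t) + (if t = s then g v - g (d s) else 0))"
    by (intro sum.cong) auto
  also have "\<dots> = (\<Sum>t\<in>A. g (d t)) + (if s \<in> A then g v - g (d s) else 0)"
    using fA by (simp add: sum.distrib sum.delta')
  finally show ?thesis .
qed

lemma UNIV_str: "(UNIV::stratum set) = {(True,True),(True,False),(False,True),(False,False)}"
  apply (rule set_eqI)
  apply (case_tac x)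
  apply (case_tac a; case_tac b)
  by auto

lemma sum_UNIV_str: "(\<Sum>t\<in>(UNIV::stratum set). f t) = f (True,True) + f (True,False) + f (False,True) + f (False,False)"
  by (simp add: UNIV_str add.assoc)

lemma sum_fst: "(\<Sum>t\<in>{t::stratum. fst t = x}. f t) = f (x,True) + f (x,False)"
proof -
  have "{t::stratum. fst t = x} = {(x,True),(x,False)}" by auto
  then show ?thesis by simp
qed

lemma sum_snd: "(\<Sum>t\<in>{t::stratum. snd t = x}. f t) = f (True,x) + f (False,x)"
proof -
  have "{t::stratum. snd t = x} = {(True,x),(False,x)}" by auto
  then show ?thesis by simp
qed

context car begin

definition Lf :: "cstate \<Rightarrow> stratum \<Rightarrow> real" where
  "Lf d s = wo * of_int (\<Sum>t\<in>UNIV. d t) + wm1 * of_int (\<Sum>t\<in>{t. fst t = fst s}. d t)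
          + wm2 * of_int (\<Sum>t\<in>{t. snd t = snd s}. d t) + ws * of_int (d s)"

definition V :: "cstate \<Rightarrow> real" where
  "V d = wo * (of_int (\<Sum>t\<in>UNIV. d t))\<^sup>2
       + wm1 * ((of_int (\<Sum>t\<in>{t. fst t = True}. d t))\<^sup>2 + (of_int (\<Sum>t\<in>{t. fst t = False}. d t))\<^sup>2)
       + wm2 * ((of_int (\<Sum>t\<in>{t. snd t = True}. d t))\<^sup>2 + (of_int (\<Sum>t\<in>{t. snd t = False}. d t))\<^sup>2)
       + ws * (\<Sum>t\<in>UNIV. (of_int (d t))\<^sup>2)"

lemma imb_diff: "imb wo wm1 wm2 ws d s 1 - imb wo wm1 wm2 ws d s (-1) = 4 * Lf d s"
  by (simp add: imb_def Lf_def power2_eq_square algebra_simps)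

lemma a_L: "(2 * a d s - 1) * Lf d s = - (p - q) * \<bar>Lf d s\<bar>"
proof -
  have h: "p * Lf d s + q * Lf d s = Lf d s" using pq by (metis distrib_right mult_1)
  show ?thesis using imb_diff[of d s] h by (auto simp: assign_prob_def abs_if algebra_simps)
qed

lemma V_nonneg: "V d \<ge> 0"
  unfolding V_def using wo wm1 wm2 ws
  by (intro add_nonneg_nonneg mult_nonneg_nonneg sum_nonneg) auto

lemma V_upd:
  assumes e: "e = 1 \<or> e = -1"
  shows "V (d(s := d s + e)) = V d + 2 * of_int e * Lf d s + 1"
proof -
  obtain x y where s: "s = (x, y)" by (cases s)
  have ws': "ws = 1 - wo - wm1 - wm2" using wsum by simp
  show ?thesis
    using e unfolding V_def Lf_def s sum_fst sum_snd sum_UNIV_str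
    by (cases x; cases y) (auto simp: ws' power2_eq_square algebra_simps)
qed

lemma V_up: "V (up d s) = V d + 2 * Lf d s + 1"
  using V_upd[of 1 d s] by (simp add: up_def)

lemma V_dn: "V (dn d s) = V d - 2 * Lf d s + 1"
  using V_upd[of "-1" d s] by (simp add: dn_def)

lemma sumZ: "(\<Sum>s\<in>UNIV. pmf Z s) = 1"
  by (rule sum_pmf_eq_1) auto

lemma Ex_V: "Ex d V = V d + 1 - 2 * (p - q) * (\<Sum>s\<in>UNIV. pmf Z s * \<bar>Lf d s\<bar>)"
proof -
  have "Ex d V = (\<Sum>s\<in>UNIV. pmf Z s * (V d + 1) - 2 * (p - q) * (pmf Z s * \<bar>Lf d s\<bar>))"
  proof (unfold Ex_def V_up V_dn, intro sum.cong refl)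
    fix s
    have "pmf Z s * (a d s * (V d + 2 * Lf d s + 1) + (1 - a d s) * (V d - 2 * Lf d s + 1))
        = pmf Z s * (V d + 1) + 2 * pmf Z s * ((2 * a d s - 1) * Lf d s)"
      by (simp add: algebra_simps)
    also have "\<dots> = pmf Z s * (V d + 1) - 2 * (p - q) * (pmf Z s * \<bar>Lf d s\<bar>)"
      by (subst a_L) (simp add: algebra_simps)
    finally show "pmf Z s * (a d s * (V d + 2 * Lf d s + 1) + (1 - a d s) * (V d - 2 * Lf d s + 1))
        = pmf Z s * (V d + 1) - 2 * (p - q) * (pmf Z s * \<bar>Lf d s\<bar>)" .
  qed
  also have "\<dots> = (\<Sum>s\<in>UNIV. pmf Z s) * (V d + 1) - 2 * (p - q) * (\<Sum>s\<in>UNIV. pmf Z s * \<bar>Lf d s\<bar>)"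
    by (simp add: sum_subtractf sum_distrib_left sum_distrib_right)
  also have "\<dots> = V d + 1 - 2 * (p - q) * (\<Sum>s\<in>UNIV. pmf Z s * \<bar>Lf d s\<bar>)"
    by (simp add: sumZ)
  finally show ?thesis .
qed

lemma V_eq: "V d = (\<Sum>s\<in>UNIV. of_int (d s) * Lf d s)"
  unfolding V_def Lf_def sum_fst sum_snd sum_UNIV_str
  by (simp add: power2_eq_square algebra_simps)

lemma n1_bound: "ws * (\<Sum>t\<in>UNIV. \<bar>of_int (d t)\<bar>) \<le> 4 * (\<Sum>s\<in>UNIV. \<bar>Lf d s\<bar>)"
proof -
  define n1 where "n1 = (\<Sum>t\<in>UNIV. \<bar>(of_int (d t)::real)\<bar>)"
  define SL where "SL = (\<Sum>s\<in>UNIV. \<bar>Lf d s\<bar>)"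
  have n1_0: "n1 \<ge> 0" unfolding n1_def by (simp add: sum_nonneg)
  have SL0: "SL \<ge> 0" unfolding SL_def by (simp add: sum_nonneg)
  have c1: "V d \<le> n1 * SL"
  proof -
    have "V d \<le> (\<Sum>s\<in>UNIV. \<bar>(of_int (d s)::real)\<bar> * \<bar>Lf d s\<bar>)"
      unfolding V_eq by (intro sum_mono) (metis abs_ge_self abs_mult)
    also have "\<dots> \<le> (\<Sum>s\<in>UNIV. n1 * \<bar>Lf d s\<bar>)"
      unfolding n1_def by (intro sum_mono mult_right_mono member_le_sum) auto
    finally show ?thesis by (simp add: SL_def sum_distrib_left)
  qed
  have c2: "ws * (\<Sum>t\<in>UNIV. (of_int (d t))\<^sup>2) \<le> V d"
    unfolding V_def using wo wm1 wm2
    by (intro add_increasing mult_nonneg_nonneg add_nonneg_nonneg) auto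
  have c3: "n1\<^sup>2 \<le> 4 * (\<Sum>t\<in>UNIV. (of_int (d t))\<^sup>2)"
  proof -
    define x1 where "x1 = \<bar>(of_int (d (True,True))::real)\<bar>"
    define x2 where "x2 = \<bar>(of_int (d (True,False))::real)\<bar>"
    define x3 where "x3 = \<bar>(of_int (d (False,True))::real)\<bar>"
    define x4 where "x4 = \<bar>(of_int (d (False,False))::real)\<bar>"
    have "n1 = x1 + x2 + x3 + x4" unfolding n1_def x1_def x2_def x3_def x4_def by (simp add: sum_UNIV_str)
    moreover have "(\<Sum>t\<in>UNIV. (of_int (d t))\<^sup>2) = x1\<^sup>2 + x2\<^sup>2 + x3\<^sup>2 + x4\<^sup>2"
      unfolding x1_def x2_def x3_def x4_def by (simp add: sum_UNIV_str)
    moreover have "0 \<le> (x1-x2)\<^sup>2 + (x1-x3)\<^sup>2 + (x1-x4)\<^sup>2 + (x2-x3)\<^sup>2 + (x2-x4)\<^sup>2 + (x3-x4)\<^sup>2"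
      by simp
    ultimately show ?thesis by (simp add: power2_eq_square algebra_simps)
  qed
  have "ws * n1\<^sup>2 \<le> 4 * (n1 * SL)"
  proof -
    have "ws * n1\<^sup>2 \<le> ws * (4 * (\<Sum>t\<in>UNIV. (of_int (d t))\<^sup>2))"
      by (rule mult_left_mono[OF c3]) (use ws in simp)
    then show ?thesis using c1 c2 by linarith
  qed
  then have "n1 * (ws * n1) \<le> n1 * (4 * SL)" by (simp add: power2_eq_square algebra_simps)
  then have "ws * n1 \<le> 4 * SL" if "n1 > 0" using that by simp
  moreover have "ws * n1 \<le> 4 * SL" if "n1 = 0" using that SL0 by simp
  ultimately show ?thesis using n1_0 unfolding n1_def SL_def by linarith
qed

end



lemma sum_upd_int: fixes g :: "'b \<Rightarrow> int" shows "finite A \<Longrightarrow> (\<Sum>t\<in>A. g ((d(s := v)) t)) = (\<Sum>t\<in>A. g (d t)) + (if s \<in> A then g v - g (d s) else 0)"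
proof -
  assume fA: "finite A"
  have "(\<Sum>t\<in>A. g ((d(s := v)) t)) = (\<Sum>t\<in>A. g (d t) + (if t = s then g v - g (d s) else 0))"
    by (intro sum.cong) auto
  also have "\<dots> = (\<Sum>t\<in>A. g (d t)) + (if s \<in> A then g v - g (d s) else 0)"
    using fA by (simp add: sum.distrib sum.delta')
  finally show ?thesis .
qed

context car begin

lemma Ex_mono: "(\<And>y. F y \<le> G y) \<Longrightarrow> Ex d F \<le> Ex d G"
  unfolding Ex_def using a_01
  by (intro sum_mono mult_left_mono add_mono) auto

lemma Ex_nonneg: "(\<And>y. F y \<ge> 0) \<Longrightarrow> Ex d F \<ge> 0"
  unfolding Ex_def using a_01
  by (intro sum_nonneg mult_nonneg_nonneg add_nonneg_nonneg) auto

lemma Ex_lin: "Ex d (\<lambda>y. F y + c * G y) = Ex d F + c * Ex d G"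
proof -
  have "Ex d (\<lambda>y. F y + c * G y) = (\<Sum>s\<in>UNIV. pmf Z s * (a d s * F (up d s) + (1 - a d s) * F (dn d s))
     + c * (pmf Z s * (a d s * G (up d s) + (1 - a d s) * G (dn d s))))"
    unfolding Ex_def by (intro sum.cong) (auto simp: algebra_simps)
  then show ?thesis unfolding Ex_def by (simp add: sum.distrib sum_distrib_left)
qed

lemma Ex_const_minus: "Ex d (\<lambda>y. c - G y) = c - Ex d G"
proof -
  have "Ex d (\<lambda>y. c - G y) = (\<Sum>s\<in>UNIV. pmf Z s * c - pmf Z s * (a d s * G (up d s) + (1 - a d s) * G (dn d s)))"
    unfolding Ex_def by (intro sum.cong) (auto simp: algebra_simps)
  then have "Ex d (\<lambda>y. c - G y) = (\<Sum>s\<in>UNIV. pmf Z s) * c - Ex d G"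
    unfolding Ex_def by (simp add: sum_subtractf sum_distrib_right)
  then show ?thesis by (simp add: sumZ)
qed

definition pmin where "pmin = Min (range (pmf Z))"

lemma pmin: "pmin > 0" "pmf Z s \<ge> pmin"
proof -
  have "finite (range (pmf Z))" by simp
  then show "pmin > 0" unfolding pmin_def using Zpos by (subst Min_gr_iff) auto
  show "pmf Z s \<ge> pmin" unfolding pmin_def by (rule Min_le) auto
qed

definition gam where "gam = q * pmin / 2"

lemma gam: "gam > 0" "gam \<le> 1"
proof -
  show "gam > 0" using q0 pmin by (simp add: gam_def)
  have "pmin \<le> 1" using pmin(2)[of undefined] pmf_le_1[of Z undefined] by linarith
  moreover have "q \<le> 1" using qp p1 by simp
  ultimately have "q * pmin \<le> 1 * 1" using q0 pmin by (intro mult_mono) auto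
  then show "gam \<le> 1" by (simp add: gam_def)
qed

definition Rd :: "cstate \<Rightarrow> cstate \<Rightarrow> int" where "Rd x0 d = (\<Sum>t\<in>UNIV. \<bar>d t - x0 t\<bar>)"

lemma Rd_nonneg: "Rd x0 d \<ge> 0" unfolding Rd_def by (simp add: sum_nonneg)

lemma Rd_upd: "Rd x0 (d(s := v)) = Rd x0 d + \<bar>v - x0 s\<bar> - \<bar>d s - x0 s\<bar>"
  unfolding Rd_def using sum_upd_int[of UNIV "\<lambda>t. 0" d s v] 
proof -
  have "(\<Sum>t\<in>UNIV. \<bar>(d(s := v)) t - x0 t\<bar>) = (\<Sum>t\<in>UNIV. \<bar>d t - x0 t\<bar> + (if t = s then \<bar>v - x0 s\<bar> - \<bar>d s - x0 s\<bar> else 0))"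
    by (intro sum.cong) auto
  then show "(\<Sum>t\<in>UNIV. \<bar>(d(s := v)) t - x0 t\<bar>) = (\<Sum>t\<in>UNIV. \<bar>d t - x0 t\<bar>) + \<bar>v - x0 s\<bar> - \<bar>d s - x0 s\<bar>"
    by (simp add: sum.distrib)
qed

definition G :: "cstate \<Rightarrow> cstate \<Rightarrow> real" where "G x0 d = gam ^ nat (Rd x0 d)"

lemma G_nonneg: "G x0 d \<ge> 0" using gam by (simp add: G_def)
lemma G_le1: "G x0 d \<le> 1" using gam by (simp add: G_def power_le_one)

lemma Ex_G: assumes "d \<noteq> x0" shows "Ex d (G x0) \<ge> 2 * G x0 d"
proof -
  have "\<exists>t. d t \<noteq> x0 t" using assms by (auto simp: fun_eq_iff)
  then obtain t where t: "d t \<noteq> x0 t" by blast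
  define y where "y = (if d t > x0 t then dn d t else up d t)"
  define w where "w = (if d t > x0 t then 1 - a d t else a d t)"
  have Ry: "Rd x0 y + 1 = Rd x0 d" using t unfolding y_def up_def dn_def by (auto simp: Rd_upd)
  have Gy: "G x0 d = gam * G x0 y"
  proof -
    have "nat (Rd x0 d) = Suc (nat (Rd x0 y))" using Ry Rd_nonneg[of x0 y] by linarith
    then show ?thesis by (simp add: G_def)
  qed
  have wq: "w \<ge> q" using a_bounds[of d t] pq unfolding w_def by auto
  have tt: "pmf Z t * (a d t * G x0 (up d t) + (1 - a d t) * G x0 (dn d t)) \<ge> pmin * (q * G x0 y)"
  proof -
    have "w * G x0 y \<le> a d t * G x0 (up d t) + (1 - a d t) * G x0 (dn d t)"
      unfolding w_def y_def using a_01[of d t] G_nonneg[of x0] by (auto intro: mult_nonneg_nonneg)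
    moreover have "q * G x0 y \<le> w * G x0 y" using wq G_nonneg[of x0 y] by (intro mult_right_mono) auto
    ultimately have "q * G x0 y \<le> a d t * G x0 (up d t) + (1 - a d t) * G x0 (dn d t)" by linarith
    then show ?thesis using pmin(2)[of t] q0 G_nonneg[of x0 y]
      by (intro mult_mono) auto
  qed
  have "pmf Z t * (a d t * G x0 (up d t) + (1 - a d t) * G x0 (dn d t)) \<le> Ex d (G x0)"
    unfolding Ex_def
    by (rule member_le_sum[where f="\<lambda>s. pmf Z s * (a d s * G x0 (up d s) + (1 - a d s) * G x0 (dn d s))"])
       (use a_01 G_nonneg in \<open>auto intro!: mult_nonneg_nonneg add_nonneg_nonneg\<close>)
  moreover have "pmin * (q * G x0 y) = 2 * G x0 d"
    using Gy pmin(1) q0 by (simp add: gam_def field_simps)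
  ultimately show ?thesis using tt by linarith
qed

definition U where "U x0 d = 1 - G x0 d"

lemma Ex_U: "d \<noteq> x0 \<Longrightarrow> Ex d (U x0) \<le> U x0 d - G x0 d"
  using Ex_G[of d x0] Ex_const_minus[of d 1 "G x0"] unfolding U_def by (simp add: fun_eq_iff)

end



context car begin

definition B0 where "B0 = 4 / ((p - q) * pmin * ws)"
definition N0 where "N0 x0 = nat \<lceil>B0 + of_int (\<Sum>t\<in>UNIV. \<bar>x0 t\<bar>)\<rceil>"
definition M where "M x0 = 2 / gam ^ (N0 x0)"
definition W where "W x0 d = (if d = x0 then 0 else V d + M x0 * U x0 d)"

lemma U_nonneg: "U x0 d \<ge> 0" using G_le1 by (simp add: U_def)
lemma M_pos: "M x0 > 0" using gam by (simp add: M_def)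
lemma VMU_nonneg: "0 \<le> V y + M x0 * U x0 y"
proof -
  have "0 \<le> M x0 * U x0 y" using M_pos[of x0] U_nonneg[of x0 y] by simp
  then show ?thesis using V_nonneg[of y] by simp
qed
lemma W_nonneg: "W x0 d \<ge> 0"
  using VMU_nonneg by (simp add: W_def)
lemma W_le: "W x0 y \<le> V y + M x0 * U x0 y"
  using VMU_nonneg by (simp add: W_def)

lemma inner_bound:
  assumes "(p - q) * (\<Sum>s\<in>UNIV. pmf Z s * \<bar>Lf d s\<bar>) < 1"
  shows "nat (Rd x0 d) \<le> N0 x0"
proof -
  define SL where "SL = (\<Sum>s\<in>UNIV. \<bar>Lf d s\<bar>)"
  define n1 where "n1 = (\<Sum>t\<in>UNIV. \<bar>(of_int (d t)::real)\<bar>)"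
  have pq0: "p - q > 0" using qp by simp
  have "pmin * SL \<le> (\<Sum>s\<in>UNIV. pmf Z s * \<bar>Lf d s\<bar>)"
    unfolding SL_def sum_distrib_left using pmin(2) by (intro sum_mono mult_right_mono) auto
  then have "(p - q) * (pmin * SL) < 1" using assms pq0
    by (meson le_less_trans mult_left_mono less_le)
  moreover have "ws * n1 \<le> 4 * SL" unfolding n1_def SL_def by (rule n1_bound)
  then have "((p - q) * pmin) * (ws * n1) \<le> ((p - q) * pmin) * (4 * SL)"
    using pq0 pmin(1) by (intro mult_left_mono) auto
  ultimately have "((p - q) * pmin * ws) * n1 < 4" by (simp add: algebra_simps)
  then have n1B: "n1 < B0" unfolding B0_def using pq0 pmin(1) ws
    by (simp add: less_divide_eq mult.commute)
  have "Rd x0 d \<le> (\<Sum>t\<in>UNIV. \<bar>d t\<bar> + \<bar>x0 t\<bar>)"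
    unfolding Rd_def by (intro sum_mono) (simp add: abs_triangle_ineq4)
  then have "real_of_int (Rd x0 d) \<le> real_of_int ((\<Sum>t\<in>UNIV. \<bar>d t\<bar>) + (\<Sum>t\<in>UNIV. \<bar>x0 t\<bar>))"
    by (simp only: of_int_le_iff sum.distrib)
  then have "real_of_int (Rd x0 d) \<le> n1 + of_int (\<Sum>t\<in>UNIV. \<bar>x0 t\<bar>)"
    unfolding n1_def by simp
  then have "real_of_int (Rd x0 d) \<le> B0 + of_int (\<Sum>t\<in>UNIV. \<bar>x0 t\<bar>)" using n1B by linarith
  then have "Rd x0 d \<le> \<lceil>B0 + of_int (\<Sum>t\<in>UNIV. \<bar>x0 t\<bar>)\<rceil>" by (simp add: le_ceiling_iff)
  then show ?thesis unfolding N0_def by (simp add: nat_mono)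
qed

lemma W_drift:
  assumes dx: "d \<noteq> x0"
  shows "Ex d (W x0) + 1 \<le> W x0 d"
proof -
  have "Ex d (W x0) \<le> Ex d (\<lambda>y. V y + M x0 * U x0 y)" by (rule Ex_mono) (rule W_le)
  also have "\<dots> = Ex d V + M x0 * Ex d (U x0)" by (rule Ex_lin)
  finally have E1: "Ex d (W x0) \<le> Ex d V + M x0 * Ex d (U x0)" .
  have EU: "M x0 * Ex d (U x0) \<le> M x0 * (U x0 d - G x0 d)"
    using Ex_U[OF dx] M_pos[of x0] by (intro mult_left_mono) auto
  have Wd: "W x0 d = V d + M x0 * U x0 d" using dx by (simp add: W_def)
  have S0: "(\<Sum>s\<in>UNIV. pmf Z s * \<bar>Lf d s\<bar>) \<ge> 0" by (simp add: sum_nonneg)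
  show ?thesis
  proof (cases "(p - q) * (\<Sum>s\<in>UNIV. pmf Z s * \<bar>Lf d s\<bar>) < 1")
    case True
    have "nat (Rd x0 d) \<le> N0 x0" by (rule inner_bound[OF True])
    then have "gam ^ N0 x0 \<le> G x0 d" unfolding G_def using gam
      by (intro power_decreasing) auto
    then have "M x0 * G x0 d \<ge> 2" using gam unfolding M_def by (simp add: field_simps)
    moreover have "Ex d V \<le> V d + 1" using Ex_V[of d] S0 qp by (simp add: mult_nonneg_nonneg)
    ultimately show ?thesis using E1 EU Wd by (simp add: algebra_simps)
  next
    case False
    then have "Ex d V \<le> V d - 1" using Ex_V[of d] by linarith
    moreover have "M x0 * G x0 d \<ge> 0" using M_pos[of x0] G_nonneg[of x0 d] by simp
    ultimately show ?thesis using E1 EU Wd by (simp add: algebra_simps)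
  qed
qed

lemma pos_rec: "positive_recurrent K x0"
proof (rule foster_generic[where W="W x0"])
  show "\<And>y. W x0 y \<ge> 0" by (rule W_nonneg)
  show "W x0 x0 = 0" by (simp add: W_def)
  show "(\<integral>\<^sup>+ y. ennreal (W x0 y) \<partial>K x0) < \<infinity>"
    using K_expect[of "W x0" x0] W_nonneg by simp
  fix d assume dx: "d \<noteq> x0"
  have "(\<integral>\<^sup>+ y. ennreal (W x0 y) \<partial>K d) + 1 = ennreal (Ex d (W x0) + 1)"
    using K_expect[of "W x0" d] W_nonneg Ex_nonneg[of "W x0" d]
    by (simp add: ennreal_plus)
  also have "\<dots> \<le> ennreal (W x0 d)" using W_drift[OF dx] by (simp add: ennreal_leI)
  finally show "(\<integral>\<^sup>+ y. ennreal (W x0 y) \<partial>K d) + 1 \<le> ennreal (W x0 d)" .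
qed

end



context car begin

lemma setK: "set_pmf (K d) = range (up d) \<union> range (dn d)"
proof -
  have "set_pmf (K d) = (\<Union>s. (\<lambda>b. d(s := d s + (if b then 1 else -1))) ` UNIV)"
    unfolding car_kernel_def using a_bounds by (simp add: setZ)
  also have "\<dots> = (\<Union>s. {up d s, dn d s})"
    by (auto simp: up_def dn_def UNIV_bool)
  finally show ?thesis by auto
qed

lemma n_step_pos: "n_step K n x y > 0 \<longleftrightarrow> y \<in> set_pmf (mc_steps K n x)"
  by (simp add: n_step_def pmf_positive_iff)

lemma mc_Suc: "y \<in> set_pmf (mc_steps K n x) \<Longrightarrow> z \<in> set_pmf (K y) \<Longrightarrow> z \<in> set_pmf (mc_steps K (Suc n) x)"
  by auto

lemma reach_aux: "\<forall>y. nat (Rd x y) = N \<longrightarrow> (\<exists>n. y \<in> set_pmf (mc_steps K n x))"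
proof (induction N)
  case 0
  show ?case
  proof (intro allI impI)
    fix y assume "nat (Rd x y) = 0"
    then have "Rd x y = 0" using Rd_nonneg[of x y] by linarith
    then have "\<forall>t\<in>UNIV. \<bar>y t - x t\<bar> = 0" unfolding Rd_def
      by (subst sum_nonneg_eq_0_iff[symmetric]) auto
    then have "y = x" by (auto simp: fun_eq_iff)
    then show "\<exists>n. y \<in> set_pmf (mc_steps K n x)" by (intro exI[of _ 0]) simp
  qed
next
  case (Suc N)
  show ?case
  proof (intro allI impI)
    fix y assume yN: "nat (Rd x y) = Suc N"
    have "y \<noteq> x" using yN by (auto simp: Rd_def)
    then have "\<exists>t. y t \<noteq> x t" by (auto simp: fun_eq_iff)
    then obtain t where t: "y t \<noteq> x t" by blast
    define y' where "y' = (if y t > x t then dn y t else up y t)"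
    have "Rd x y' + 1 = Rd x y" using t unfolding y'_def up_def dn_def by (auto simp: Rd_upd)
    then have "nat (Rd x y') = N" using yN Rd_nonneg[of x y'] by linarith
    then obtain n where n: "y' \<in> set_pmf (mc_steps K n x)" using Suc.IH by blast
    have yy: "y = (if y t > x t then up y' t else dn y' t)"
      unfolding y'_def by (auto simp: up_def dn_def fun_eq_iff)
    have "y \<in> set_pmf (K y')"
      unfolding setK by (subst yy) auto
    then show "\<exists>n. y \<in> set_pmf (mc_steps K n x)" using mc_Suc[OF n] by blast
  qed
qed

lemma accessible_all: "accessible K x y"
  unfolding accessible_def n_step_pos using reach_aux[of x "nat (Rd x y)"] by blast

definition Sm :: "cstate \<Rightarrow> int" where "Sm d = (\<Sum>t\<in>UNIV. d t)"

lemma Sm_upd: "Sm (d(s := v)) = Sm d + v - d s"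
  unfolding Sm_def using sum_upd_int[of UNIV "\<lambda>x. x" d s v] by simp

lemma parity: "y \<in> set_pmf (mc_steps K n x) \<Longrightarrow> even (Sm y + Sm x + int n)"
proof (induction n arbitrary: y)
  case 0 then show ?case by simp
next
  case (Suc n)
  then obtain z where z: "z \<in> set_pmf (mc_steps K n x)" "y \<in> set_pmf (K z)" by auto
  have ev: "even (Sm z + Sm x + int n)" using Suc.IH[OF z(1)] .
  from z(2) obtain s where "y = up z s \<or> y = dn z s" unfolding setK by auto
  then have "Sm y = Sm z + 1 \<or> Sm y = Sm z - 1" by (auto simp: up_def dn_def Sm_upd)
  then show ?case using ev by auto
qed

lemma period_all: "period K x = 2"
proof -
  define A where "A = {n. 0 < n \<and> 0 < n_step K n x x}"
  have evA: "2 dvd n" if "n \<in> A" for n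
  proof -
    have "even (Sm x + Sm x + int n)" using that parity unfolding A_def n_step_pos by blast
    then have "even (int n)" by (metis add_diff_cancel_left' even_add even_diff mult_2 dvd_triv_left)
    then show ?thesis by simp
  qed
  have "2 \<in> A"
  proof -
    obtain s :: stratum where True by simp
    have "up x s \<in> set_pmf (mc_steps K 1 x)" by (simp add: setK)
    moreover have "x \<in> set_pmf (K (up x s))"
    proof -
      have "dn (up x s) s = x" by (simp add: up_def dn_def)
      then show ?thesis unfolding setK by (metis UNIV_I UnCI image_eqI)
    qed
    ultimately have "x \<in> set_pmf (mc_steps K 2 x)" using mc_Suc[of "up x s" 1 x x]
      by (simp add: numeral_2_eq_2)
    then show ?thesis unfolding A_def n_step_pos by simp
  qed
  have "Gcd A dvd 2" using \<open>2 \<in> A\<close> by (rule Gcd_dvd)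
  moreover have "2 dvd Gcd A" using evA by (intro Gcd_greatest) auto
  ultimately show ?thesis unfolding period_def A_def[symmetric] by (rule dvd_antisym)
qed

end

theorem theorem1:
  fixes wo wm1 wm2 ws p q :: real and Z :: "stratum pmf"
  assumes "wo \<ge> 0" "wm1 \<ge> 0" "wm2 \<ge> 0" "ws \<ge> 0"
    and "wo + wm1 + wm2 + ws = 1"
    and "0 < q" "q < p" "p < 1" "p + q = 1"
    and "\<forall>s. pmf Z s > 0"
    and A: "ws > 0"
    and B: "\<forall>x1 x2 x3 :: real.
        (wo + wm1 + wm2 + ws) * x1 + (wo + wm1) * x2 + (wo + wm2) * x3 = wo
      \<and> (wo + wm1) * x1 + (wo + wm1 + wm2 + ws) * x2 + wo * x3 = wo + wm2
      \<and> (wo + wm2) * x1 + wo * x2 + (wo + wm1 + wm2 + ws) * x3 = wo + wm1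
      \<longrightarrow> \<bar>x1\<bar> + \<bar>x2\<bar> + \<bar>x3\<bar> < 1"
  shows "(\<forall>y\<in>chain_states (car_kernel wo wm1 wm2 ws p q Z).
            \<forall>z\<in>chain_states (car_kernel wo wm1 wm2 ws p q Z).
              accessible (car_kernel wo wm1 wm2 ws p q Z) y z)
       \<and> (\<forall>y\<in>chain_states (car_kernel wo wm1 wm2 ws p q Z).
            positive_recurrent (car_kernel wo wm1 wm2 ws p q Z) y
          \<and> period (car_kernel wo wm1 wm2 ws p q Z) y = 2)"
proof -
  interpret car wo wm1 wm2 ws p q Z
    by unfold_locales (use assms in auto)
  show ?thesis using accessible_all pos_rec period_all by blast
qed


end
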